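(* Let $m,n$ be positive integers with $n\le m$. Suppose there is a scheme that encodes every set $S\subseteq[m]$ with $|S|\leq n$ as a bit string $\phi(S)\in\{0,1\}^s$, together with an exact quantum bit-probe query algorithm that, for every such $S$ and every $i\in[m]$, given query $i$ and oracle access to $\phi(S)$, outputs with certainty whether $i\in S$, making only one bit-probe. Then $s\geq m$.
   Context: $[m]=\{0,\dots,m-1\}$. Quantum bit-probe model: the algorithm operates on a Hilbert space $\mathcal H_L\otimes\mathcal H_B\otimes\mathcal H_Z$, where $\mathcal H_L$ holds $\lceil\log_2 s\rceil$ address qubits, $\mathcal H_B$ is one data qubit and $\mathcal H_Z$ is an arbitrary workspace. For an input string $x\in\{0,1\}^s$ the oracle $O_x$ acts on basis states by $|l\rangle|b\rangle|z\rangle\mapsto|l\rangle|b\oplus x_l\rangle|z\rangle$. An algorithm with $t$ probes is a sequence of input-independent unitaries $U_0,\dots,U_t$; on query $i$ it starts in a fixed basis state encoding $i$ (with all other qubits $|0\rangle$), applies $U_tO_xU_{t-1}O_x\cdots U_1O_xU_0$, and outputs the result of measuring designated output qubits in the computational basis. It is exact if the output is correct with probability 1 for every input and query. *)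

theory Defs
  imports "Jordan_Normal_Form.Schur_Decomposition"
begin

definition addr_qubits :: "nat \<Rightarrow> nat" where
  "addr_qubits s = (LEAST a. s \<le> 2 ^ a)"

text \<open>Dimension of H_L (x) H_B (x) H_Z, where the workspace consists of w qubits.
  Basis state |l>|b>|z> has index (2*l + b) * 2^w + z.\<close>
definition bp_dim :: "nat \<Rightarrow> nat \<Rightarrow> nat" where
  "bp_dim s w = 2 ^ addr_qubits s * 2 * 2 ^ w"

text \<open>Image of basis index c under O_x: flip the data qubit iff x_l = 1 for the
  address l (addresses l \<ge> s, which exist when s is not a power of 2, read bit 0).\<close>
definition oracle_target :: "nat \<Rightarrow> nat \<Rightarrow> (nat \<Rightarrow> bool) \<Rightarrow> nat \<Rightarrow> nat" where
  "oracle_target s w x c =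
     (let W = 2 ^ w; l = c div (2 * W) in
      if l < s \<and> x l then (if (c div W) mod 2 = 0 then c + W else c - W) else c)"

definition oracle_mat :: "nat \<Rightarrow> nat \<Rightarrow> (nat \<Rightarrow> bool) \<Rightarrow> complex mat" where
  "oracle_mat s w x = mat (bp_dim s w) (bp_dim s w)
     (\<lambda>(r, c). if r = oracle_target s w x c then 1 else 0)"

definition unitary_mat :: "nat \<Rightarrow> complex mat \<Rightarrow> bool" where
  "unitary_mat N U \<longleftrightarrow> U \<in> carrier_mat N N \<and> mat_adjoint U * U = 1\<^sub>m N"

definition one_probe_final ::
  "nat \<Rightarrow> nat \<Rightarrow> complex mat \<Rightarrow> complex mat \<Rightarrow> (nat \<Rightarrow> bool) \<Rightarrow> nat \<Rightarrow> complex vec" where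
  "one_probe_final s w U0 U1 x q =
     U1 * oracle_mat s w x * U0 *\<^sub>v unit_vec (bp_dim s w) q"

end

theory Submission
  imports Defs
begin

lemma key_det:
  fixes c \<beta> :: "nat \<Rightarrow> nat \<Rightarrow> complex"
  assumes off: "\<And>i j. i < m \<Longrightarrow> j < m \<Longrightarrow> j \<noteq> i \<Longrightarrow> (\<Sum>l<s. c j l * \<beta> i l) = 0"
    and diag: "\<And>i. i < m \<Longrightarrow> (\<Sum>l<s. c i l * \<beta> i l) \<noteq> 0"
  shows "m \<le> s"
proof (rule ccontr)
  assume "\<not> m \<le> s"
  hence sm: "s < m" by simp
  define C where "C = mat m m (\<lambda>(j,l). if l < s then c j l else 0)"
  define B where "B = mat m m (\<lambda>(l,i). if l < s then \<beta> i l else 0)"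
  have C: "C \<in> carrier_mat m m" and B: "B \<in> carrier_mat m m" unfolding C_def B_def by auto
  have P: "(C * B) $$ (j,i) = (\<Sum>l<s. c j l * \<beta> i l)" if "j < m" "i < m" for i j
  proof -
    have "(C * B) $$ (j,i) = (\<Sum>l\<in>{0..<m}. (if l < s then c j l else 0) * (if l < s then \<beta> i l else 0))"
      using that unfolding C_def B_def by (simp add: scalar_prod_def)
    also have "\<dots> = (\<Sum>l\<in>{0..<s}. c j l * \<beta> i l)"
      by (rule sum.mono_neutral_cong_right) (use sm in auto)
    finally show ?thesis by (simp add: atLeast0LessThan)
  qed
  have CB: "C * B \<in> carrier_mat m m" using C B by auto
  have ut: "upper_triangular (C * B)"
    unfolding upper_triangular_def using CB P off by auto
  have "det (C * B) = prod_list (diag_mat (C * B))"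
    by (rule det_upper_triangular[OF ut CB])
  also have "\<dots> \<noteq> 0"
    unfolding prod_list_zero_iff diag_mat_def using CB P diag by auto
  finally have ne: "det (C * B) \<noteq> 0" .
  have "B = mat\<^sub>r m m (\<lambda>l. if l = s then 0\<^sub>v m else row B l)"
    by (rule eq_matI) (use sm in \<open>auto simp: B_def\<close>)
  hence "det B = 0"
    using det_row_0[of s m "\<lambda>l. row B l"] sm B by auto
  with det_mult[OF C B] ne show False by simp
qed

definition flipb :: "nat \<Rightarrow> nat \<Rightarrow> nat" where
  "flipb W c = (if (c div W) mod 2 = 0 then c + W else c - W)"

lemma flip_props:
  fixes W c :: nat assumes W: "0 < W"
  shows "flipb W c div (2*W) = c div (2*W)" "flipb W (flipb W c) = c"
proof -
  have d: "x div (2*W) = x div W div 2" for x by (metis div_mult2_eq mult.commute)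
  define q where "q = c div W"
  have "flipb W c div (2*W) = c div (2*W) \<and> flipb W (flipb W c) = c"
  proof (cases "q mod 2 = 0")
    case True
    then obtain k where k: "q = 2*k" by auto
    have e: "(c + W) div W = q + 1" using W unfolding q_def by simp
    have f: "flipb W c = c + W" using True unfolding flipb_def q_def by simp
    have g: "flipb W (c + W) = c" unfolding flipb_def e k by simp
    show ?thesis unfolding f g d e using k unfolding q_def by simp
  next
    case False
    then obtain k where k: "q = 2*k+1" by (metis mod2_eq_if odd_two_times_div_two_succ)
    hence cW: "c \<ge> W" using W unfolding q_def by (metis div_less not_less add_is_0 zero_neq_one)
    have e: "(c - W) div W = q - 1" using W cW unfolding q_def
      by (metis add_diff_cancel_right' div_add_self2 le_add_diff_inverse2 less_not_refl2)
    have f: "flipb W c = c - W" using False unfolding flipb_def q_def by simp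
    have g: "flipb W (c - W) = c" unfolding flipb_def e k using cW by simp
    show ?thesis unfolding f g d e using k unfolding q_def by simp
  qed
  thus "flipb W c div (2*W) = c div (2*W)" "flipb W (flipb W c) = c" by auto
qed

lemma target_flip: "oracle_target s w x c =
   (if c div (2 * 2^w) < s \<and> x (c div (2 * 2^w)) then flipb (2^w) c else c)"
  unfolding oracle_target_def flipb_def Let_def by simp

lemma bp_less: "c < bp_dim s w \<longleftrightarrow> c div (2 * 2^w) < 2 ^ addr_qubits s"
  unfolding bp_dim_def
  using div_less_iff_less_mult[of "2*2^w" c "2^addr_qubits s"] by (simp add: mult.assoc)

lemma target_bound: "c < bp_dim s w \<Longrightarrow> oracle_target s w x c < bp_dim s w"
  unfolding target_flip bp_less using flip_props(1)[of "2^w" c] by auto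

lemma target_inv: "oracle_target s w x (oracle_target s w x c) = c"
  unfolding target_flip using flip_props[of "2^w" c] by auto


lemma oracle_carrier: "oracle_mat s w x \<in> carrier_mat (bp_dim s w) (bp_dim s w)"
  unfolding oracle_mat_def by simp

lemma oracle_apply:
  assumes v: "v \<in> carrier_vec (bp_dim s w)" and r: "r < bp_dim s w"
  shows "(oracle_mat s w x *\<^sub>v v) $ r = v $ (oracle_target s w x r)"
proof -
  let ?N = "bp_dim s w" and ?t = "oracle_target s w x"
  have "(oracle_mat s w x *\<^sub>v v) $ r = (\<Sum>i\<in>{0..<?N}. (if r = ?t i then 1 else 0) * v $ i)"
    using v r unfolding oracle_mat_def by (simp add: scalar_prod_def)
  also have "\<dots> = (\<Sum>i\<in>{0..<?N}. if i = ?t r then v $ i else 0)"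
    by (rule sum.cong) (auto simp: target_inv)
  also have "\<dots> = v $ ?t r" using target_bound[OF r] by simp
  finally show ?thesis .
qed

lemma unitary_inj:
  assumes U: "unitary_mat N U" and v: "v \<in> carrier_vec N" and z: "U *\<^sub>v v = 0\<^sub>v N"
  shows "v = 0\<^sub>v N"
proof -
  have UC: "U \<in> carrier_mat N N" and UU: "mat_adjoint U * U = 1\<^sub>m N"
    using U unfolding unitary_mat_def by auto
  have AC: "mat_adjoint U \<in> carrier_mat N N"
    using UC unfolding mat_adjoint_def carrier_mat_def by simp
  have "v = 1\<^sub>m N *\<^sub>v v" using v by (rule one_mult_mat_vec[symmetric])
  also have "\<dots> = (mat_adjoint U * U) *\<^sub>v v" by (simp only: UU)
  also have "\<dots> = mat_adjoint U *\<^sub>v (U *\<^sub>v v)" by (rule assoc_mult_mat_vec[OF AC UC v])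
  also have "\<dots> = 0\<^sub>v N" unfolding z by (rule eq_vecI) (use AC in \<open>auto simp: scalar_prod_def\<close>)
  finally show ?thesis .
qed

lemma oracle_inj:
  assumes v: "v \<in> carrier_vec (bp_dim s w)" and z: "oracle_mat s w x *\<^sub>v v = 0\<^sub>v (bp_dim s w)"
  shows "v = 0\<^sub>v (bp_dim s w)"
proof (rule eq_vecI)
  show "dim_vec v = dim_vec (0\<^sub>v (bp_dim s w))" using v by simp
  fix r assume "r < dim_vec (0\<^sub>v (bp_dim s w))"
  hence r: "r < bp_dim s w" by simp
  have "v $ r = v $ oracle_target s w x (oracle_target s w x r)" by (simp add: target_inv)
  also have "\<dots> = (oracle_mat s w x *\<^sub>v v) $ (oracle_target s w x r)"
    using oracle_apply[OF v target_bound[OF r]] by simp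
  also have "\<dots> = 0" unfolding z using target_bound[OF r] by simp
  finally show "v $ r = 0\<^sub>v (bp_dim s w) $ r" using r by simp
qed

lemma final_factor:
  assumes "unitary_mat (bp_dim s w) U0" "unitary_mat (bp_dim s w) U1"
  shows "one_probe_final s w U0 U1 x q =
    U1 *\<^sub>v (oracle_mat s w x *\<^sub>v (U0 *\<^sub>v unit_vec (bp_dim s w) q))"
proof -
  have C0: "U0 \<in> carrier_mat (bp_dim s w) (bp_dim s w)" and C1: "U1 \<in> carrier_mat (bp_dim s w) (bp_dim s w)"
    using assms unfolding unitary_mat_def by auto
  show ?thesis unfolding one_probe_final_def
    using C0 C1 oracle_carrier[of s w x]
    by (subst assoc_mult_mat_vec[of _ "bp_dim s w" "bp_dim s w" _ "bp_dim s w"], auto)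
qed

lemma final_expr:
  assumes U: "unitary_mat (bp_dim s w) U0" "unitary_mat (bp_dim s w) U1" and k: "k < bp_dim s w"
  shows "one_probe_final s w U0 U1 x q $ k =
    (\<Sum>r\<in>{0..<bp_dim s w}. U1 $$ (k, r) * (U0 *\<^sub>v unit_vec (bp_dim s w) q) $ (oracle_target s w x r))"
proof -
  have C0: "U0 \<in> carrier_mat (bp_dim s w) (bp_dim s w)" and C1: "U1 \<in> carrier_mat (bp_dim s w) (bp_dim s w)"
    using U unfolding unitary_mat_def by auto
  let ?u = "U0 *\<^sub>v unit_vec (bp_dim s w) q"
  have u: "?u \<in> carrier_vec (bp_dim s w)" using C0 by simp
  let ?u' = "oracle_mat s w x *\<^sub>v ?u"
  have u': "?u' \<in> carrier_vec (bp_dim s w)" using oracle_carrier[of s w x] u by (metis mult_mat_vec_carrier)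
  have "(U1 *\<^sub>v ?u') $ k = row U1 k \<bullet> ?u'"
    by (rule index_mult_mat_vec) (use C1 k in simp)
  also have "\<dots> = (\<Sum>r\<in>{0..<bp_dim s w}. row U1 k $ r * ?u' $ r)"
    unfolding scalar_prod_def carrier_vecD[OF u'] ..
  also have "\<dots> = (\<Sum>r\<in>{0..<bp_dim s w}. U1 $$ (k, r) * ?u' $ r)"
    by (rule sum.cong) (use C1 k in auto)
  also have "\<dots> = (\<Sum>r\<in>{0..<bp_dim s w}. U1 $$ (k, r) * ?u $ (oracle_target s w x r))"
    by (rule sum.cong) (use oracle_apply[OF u] in auto)
  finally show ?thesis unfolding final_factor[OF U] .
qed

lemma final_nonzero:
  assumes U: "unitary_mat (bp_dim s w) U0" "unitary_mat (bp_dim s w) U1" and q: "q < bp_dim s w"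
  shows "\<exists>k < bp_dim s w. one_probe_final s w U0 U1 x q $ k \<noteq> 0"
proof (rule ccontr)
  let ?N = "bp_dim s w"
  assume "\<not> ?thesis"
  hence allz: "\<And>k. k < ?N \<Longrightarrow> one_probe_final s w U0 U1 x q $ k = 0" by auto
  have C0: "U0 \<in> carrier_mat ?N ?N" and C1: "U1 \<in> carrier_mat ?N ?N"
    using U unfolding unitary_mat_def by auto
  let ?e = "unit_vec ?N q :: complex vec"
  have e: "?e \<in> carrier_vec ?N" by simp
  have u0: "U0 *\<^sub>v ?e \<in> carrier_vec ?N" using C0 by simp
  have u1: "oracle_mat s w x *\<^sub>v (U0 *\<^sub>v ?e) \<in> carrier_vec ?N"
    using oracle_carrier[of s w x] u0 by (metis mult_mat_vec_carrier)
  have "U1 *\<^sub>v (oracle_mat s w x *\<^sub>v (U0 *\<^sub>v ?e)) = 0\<^sub>v ?N"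
    using allz C1 unfolding final_factor[OF U] by (intro eq_vecI) auto
  hence "oracle_mat s w x *\<^sub>v (U0 *\<^sub>v ?e) = 0\<^sub>v ?N" by (rule unitary_inj[OF U(2) u1])
  hence "U0 *\<^sub>v ?e = 0\<^sub>v ?N" by (rule oracle_inj[OF u0])
  hence "?e = 0\<^sub>v ?N" by (rule unitary_inj[OF U(1) e])
  hence "?e $ q = 0" using q by simp
  thus False using q by simp
qed

theorem mainTheorem6:
  fixes m n s w :: nat
    and \<phi> :: "nat set \<Rightarrow> (nat \<Rightarrow> bool)"
    and U0 U1 :: "complex mat"
    and init :: "nat \<Rightarrow> nat"
    and out :: "nat \<Rightarrow> bool"
  assumes "0 < n" and "n \<le> m"
    and "unitary_mat (bp_dim s w) U0" and "unitary_mat (bp_dim s w) U1"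
    and "\<And>i. i < m \<Longrightarrow> init i < bp_dim s w"
    and "\<And>S i k. S \<subseteq> {..<m} \<Longrightarrow> card S \<le> n \<Longrightarrow> i < m \<Longrightarrow> k < bp_dim s w \<Longrightarrow>
           one_probe_final s w U0 U1 (\<phi> S) (init i) $ k \<noteq> 0 \<Longrightarrow> out k = (i \<in> S)"
  shows "m \<le> s"
proof -
  let ?N = "bp_dim s w"
  let ?D = "2 * 2 ^ w :: nat"
  note U = assms(3,4)
  note hyp = assms(6)
  define x0 where "x0 = \<phi> {}"
  define y where "y j = \<phi> {j}" for j
  define \<psi> where "\<psi> i = U0 *\<^sub>v unit_vec ?N (init i)" for i
  define F where "F z i k = (\<Sum>r\<in>{0..<?N}. U1 $$ (k, r) * \<psi> i $ (oracle_target s w z r))" for z i k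
  define ind where "ind z l = (if l < s \<and> z l then 1 else 0 :: complex)" for z l
  define g where "g i k r = U1 $$ (k, r) * (\<psi> i $ flipb (2^w) r - \<psi> i $ r)" for i k r
  have FE: "one_probe_final s w U0 U1 z (init i) $ k = F z i k" if "k < ?N" for z i k
    unfolding F_def \<psi>_def by (rule final_expr[OF U that])
  have ex: "\<forall>i\<in>{..<m}. \<exists>k. k < ?N \<and> F (y i) i k \<noteq> 0 \<and> out k"
  proof
    fix i assume i: "i \<in> {..<m}"
    obtain k where k: "k < ?N" "one_probe_final s w U0 U1 (y i) (init i) $ k \<noteq> 0"
      using final_nonzero[OF U assms(5)] i by auto
    have "out k = (i \<in> {i})"
      using hyp[of "{i}" i k] k i assms(1) unfolding y_def by auto
    thus "\<exists>k. k < ?N \<and> F (y i) i k \<noteq> 0 \<and> out k" using k FE by auto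
  qed
  then obtain kf where kf: "\<And>i. i < m \<Longrightarrow> kf i < ?N \<and> F (y i) i (kf i) \<noteq> 0 \<and> out (kf i)"
    using bchoice[OF ex] by auto
  have F0: "F x0 i (kf i) = 0" if i: "i < m" for i
  proof (rule ccontr)
    assume "F x0 i (kf i) \<noteq> 0"
    hence "out (kf i) = (i \<in> {})"
      using hyp[of "{}" i "kf i"] kf[OF i] i FE unfolding x0_def by auto
    thus False using kf[OF i] by simp
  qed
  have Fj: "F (y j) i (kf i) = 0" if i: "i < m" and j: "j < m" "j \<noteq> i" for i j
  proof (rule ccontr)
    assume "F (y j) i (kf i) \<noteq> 0"
    hence "out (kf i) = (i \<in> {j})"
      using hyp[of "{j}" i "kf i"] kf[OF i] i j FE assms(1) unfolding y_def by auto
    thus False using kf[OF i] j by simp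
  qed
  have pt: "\<psi> i $ (oracle_target s w z r) - \<psi> i $ (oracle_target s w x0 r)
      = (ind z (r div ?D) - ind x0 (r div ?D)) * (\<psi> i $ flipb (2^w) r - \<psi> i $ r)" for z i r
    unfolding target_flip ind_def by (auto simp: algebra_simps)
  have diff: "F z i k - F x0 i k = (\<Sum>r\<in>{0..<?N}. (ind z (r div ?D) - ind x0 (r div ?D)) * g i k r)" for z i k
  proof -
    have "F z i k - F x0 i k = (\<Sum>r\<in>{0..<?N}. U1 $$ (k, r) *
        (\<psi> i $ (oracle_target s w z r) - \<psi> i $ (oracle_target s w x0 r)))"
      unfolding F_def by (simp add: sum_subtractf algebra_simps)
    also have "\<dots> = (\<Sum>r\<in>{0..<?N}. (ind z (r div ?D) - ind x0 (r div ?D)) * g i k r)"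
      unfolding pt g_def by (simp add: algebra_simps)
    finally show ?thesis .
  qed
  define c where "c j l = ind (y j) l - ind x0 l" for j l
  define \<beta> where "\<beta> i l = (\<Sum>r\<in>{r\<in>{0..<?N}. r div ?D = l}. g i (kf i) r)" for i l
  have grp: "(\<Sum>l<s. c j l * \<beta> i l) = F (y j) i (kf i) - F x0 i (kf i)" for i j
  proof -
    let ?S = "{r\<in>{0..<?N}. r div ?D < s}"
    have "(\<Sum>l<s. c j l * \<beta> i l) = (\<Sum>l\<in>{..<s}. \<Sum>r\<in>{r\<in>?S. r div ?D = l}. c j (r div ?D) * g i (kf i) r)"
      unfolding \<beta>_def sum_distrib_left by (rule sum.cong) (auto intro!: sum.cong)
    also have "\<dots> = (\<Sum>r\<in>?S. c j (r div ?D) * g i (kf i) r)"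
      by (rule sum.group) auto
    also have "\<dots> = (\<Sum>r\<in>{0..<?N}. c j (r div ?D) * g i (kf i) r)"
      by (rule sum.mono_neutral_left) (auto simp: c_def ind_def)
    also have "\<dots> = F (y j) i (kf i) - F x0 i (kf i)"
      unfolding diff c_def ..
    finally show ?thesis .
  qed
  show ?thesis
  proof (rule key_det[where c=c and \<beta>=\<beta>])
    fix i j assume "i < m" "j < m" "j \<noteq> i"
    thus "(\<Sum>l<s. c j l * \<beta> i l) = 0" unfolding grp using F0 Fj by simp
  next
    fix i assume "i < m"
    thus "(\<Sum>l<s. c i l * \<beta> i l) \<noteq> 0" unfolding grp using F0 kf by simp
  qed
qed

end
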